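(* Let $\beta$ be a totally positive quadratic integer with $\operatorname{Tr}\beta > \operatorname{Nm}\beta$. Then there exists a constant $c_\beta > 0$ such that $p_\beta\big((\operatorname{Tr}\beta)\beta^n\big) \leq c_\beta$ for all $n \in \mathbb{Z}_{\geq 0}$.
   Context: A quadratic integer is a root of a monic irreducible quadratic polynomial in $\mathbb{Z}[x]$; it is totally positive if both it and its conjugate $\beta'$ are positive. $\operatorname{Tr}\beta = \beta + \beta'$, $\operatorname{Nm}\beta = \beta\beta'$. For $\alpha \in \mathbb{C}$, $p_\beta(\alpha) \in \mathbb{Z}_{\geq 0}\cup\{\infty\}$ is the number of polynomials $f \in \mathbb{Z}_{\geq 0}[x]$ (non-negative integer coefficients) with $f(\beta) = \alpha$. *)

theory Defs
  imports "HOL-Computational_Algebra.Polynomial" "HOL-Library.Extended_Nat" Complex_Main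
begin

text \<open>A quadratic integer: a root of a monic irreducible quadratic polynomial in Z[x].
  The minimal polynomial is then x^2 - Tr(beta) x + Nm(beta).\<close>

definition quad_minpoly :: "int poly \<Rightarrow> complex \<Rightarrow> bool" where
  "quad_minpoly q \<beta> \<longleftrightarrow> degree q = 2 \<and> lead_coeff q = 1 \<and> irreducible q
      \<and> poly (map_poly of_int q) \<beta> = 0"

definition quadratic_integer :: "complex \<Rightarrow> bool" where
  "quadratic_integer \<beta> \<longleftrightarrow> (\<exists>q. quad_minpoly q \<beta>)"

text \<open>The minimal polynomial is unique, so these are well defined.\<close>
definition qtrace :: "complex \<Rightarrow> int" where
  "qtrace \<beta> = - coeff (THE q. quad_minpoly q \<beta>) 1"

definition qnorm :: "complex \<Rightarrow> int" where
  "qnorm \<beta> = coeff (THE q. quad_minpoly q \<beta>) 0"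

definition qconj :: "complex \<Rightarrow> complex" where
  "qconj \<beta> = of_int (qtrace \<beta>) - \<beta>"

definition totally_positive :: "complex \<Rightarrow> bool" where
  "totally_positive \<beta> \<longleftrightarrow> quadratic_integer \<beta> \<and>
     \<beta> \<in> \<real> \<and> Re \<beta> > 0 \<and> qconj \<beta> \<in> \<real> \<and> Re (qconj \<beta>) > 0"

definition p_count :: "complex \<Rightarrow> complex \<Rightarrow> enat" where
  "p_count \<beta> \<alpha> = (let S = {f :: nat poly. poly (map_poly of_nat f) \<beta> = \<alpha>} in
     if finite S then enat (card S) else \<infinity>)"

end

theory Submission imports Defs begin

lemma quad_shape:
  fixes q :: "int poly"
  assumes "degree q = 2" "lead_coeff q = 1"
  shows "q = [:coeff q 0, coeff q 1, 1:]"
proof (rule poly_eqI)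
  fix k show "coeff q k = coeff [:coeff q 0, coeff q 1, 1:] k"
  proof (cases "k \<le> 2")
    case True
    then have "k = 0 \<or> k = 1 \<or> k = 2" by auto
    then show ?thesis using assms by (auto simp: coeff_pCons split: nat.splits)
  next
    case False
    then show ?thesis using assms coeff_eq_0[of q k] by (auto simp: coeff_pCons split: nat.splits)
  qed
qed

lemma quad_eval:
  assumes "quad_minpoly q \<beta>"
  shows "\<beta>^2 + of_int (coeff q 1) * \<beta> + of_int (coeff q 0) = 0"
proof -
  have q: "q = [:coeff q 0, coeff q 1, 1:]" using assms quad_shape unfolding quad_minpoly_def by blast
  have "poly (map_poly of_int q) \<beta> = 0" using assms unfolding quad_minpoly_def by blast
  then have "poly (map_poly of_int [:coeff q 0, coeff q 1, 1:]) \<beta> = 0" using q by simp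
  then show ?thesis by (simp add: map_poly_pCons power2_eq_square algebra_simps)
qed

lemma quad_no_rat:
  fixes \<beta> :: complex and a b :: int
  assumes Q: "quad_minpoly q \<beta>" and b: "b \<noteq> 0"
  shows "of_int b * \<beta> \<noteq> of_int a"
proof
  assume ab: "of_int b * \<beta> = of_int a"
  define r :: rat where "r = of_int a / of_int b"
  obtain p d where pd: "quotient_of r = (p, d)" by (cases "quotient_of r") auto
  have d0: "d > 0" using quotient_of_denom_pos[OF pd] .
  have cop: "coprime p d" using quotient_of_coprime[OF pd] .
  have "r = of_int p / of_int d" using quotient_of_div[OF pd] .
  then have "of_int a / of_int b = (of_int p / of_int d :: rat)" using r_def by simp
  then have "(of_rat (of_int a / of_int b) :: complex) = of_rat (of_int p / of_int d)" by simp
  then have "(of_int a / of_int b :: complex) = of_int p / of_int d" by (simp add: of_rat_divide)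
  moreover have "\<beta> = of_int a / of_int b" using ab b by (simp add: field_simps)
  ultimately have beta: "\<beta> = of_int p / of_int d" by simp
  define q1 where "q1 = coeff q 1"
  define q0 where "q0 = coeff q 0"
  have E: "\<beta>^2 + of_int q1 * \<beta> + of_int q0 = 0" using quad_eval[OF Q] q1_def q0_def by simp
  have "(of_int (p^2 + q1 * p * d + q0 * d^2) :: complex) = of_int d ^ 2 * (\<beta>^2 + of_int q1 * \<beta> + of_int q0)"
  proof -
    have bp: "(of_int p :: complex) = \<beta> * of_int d" using beta d0 by simp
    have "(of_int (p^2 + q1 * p * d + q0 * d^2) :: complex) = (of_int p)^2 + of_int q1 * of_int p * of_int d + of_int q0 * (of_int d)^2" by simp
    also have "\<dots> = (\<beta> * of_int d)^2 + of_int q1 * (\<beta> * of_int d) * of_int d + of_int q0 * (of_int d)^2" by (simp only: bp)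
    also have "\<dots> = of_int d ^ 2 * (\<beta>^2 + of_int q1 * \<beta> + of_int q0)" by (simp add: power_mult_distrib field_simps) (simp add: power2_eq_square)
    finally show ?thesis .
  qed
  then have E2: "p^2 + q1 * p * d + q0 * d^2 = 0" using E by (metis mult_zero_right of_int_eq_0_iff)
  have "d dvd p^2"
  proof -
    have "p^2 = d * (- q1 * p - q0 * d)" using E2 by (simp add: algebra_simps power2_eq_square)
    then show ?thesis by simp
  qed
  moreover have "coprime d (p^2)" using cop by (simp add: coprime_commute)
  ultimately have "is_unit d" using coprime_common_divisor[of d "p^2" d] by simp
  then have d1: "d = 1" using d0 by simp
  have Ep: "p^2 + q1 * p + q0 = 0" using E2 d1 by simp
  have q: "q = [:q0, q1, 1:]" using Q quad_shape unfolding quad_minpoly_def q0_def q1_def by blast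
  have "q = [:-p, 1:] * [:p + q1, 1:]"
  proof -
    have q0e: "q0 = - (p * p) - q1 * p" using Ep by (simp add: power2_eq_square)
    have "[:-p, 1:] * [:p + q1, 1:] = [:- p * (p + q1), q1, 1:]" by simp
    then show ?thesis using q q0e by (simp add: algebra_simps)
  qed
  then have "is_unit [:-p, 1:] \<or> is_unit [:p + q1, 1:]"
    using Q irreducibleD unfolding quad_minpoly_def by blast
  then show False by (auto simp: is_unit_poly_iff)
qed

lemma quad_unique:
  assumes Q: "quad_minpoly q \<beta>" and Q': "quad_minpoly q' \<beta>"
  shows "q = q'"
proof -
  have E: "\<beta>^2 + of_int (coeff q 1) * \<beta> + of_int (coeff q 0) = 0" using quad_eval[OF Q] .
  have E': "\<beta>^2 + of_int (coeff q' 1) * \<beta> + of_int (coeff q' 0) = 0" using quad_eval[OF Q'] .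
  have D: "of_int (coeff q 1 - coeff q' 1) * \<beta> = of_int (coeff q' 0 - coeff q 0)"
    using E E' by (simp add: algebra_simps) (metis (no_types, lifting) add.commute add_diff_cancel_left diff_add_eq diff_diff_eq2 diff_eq_diff_eq)
  have 1: "coeff q 1 = coeff q' 1"
  proof (rule ccontr)
    assume "coeff q 1 \<noteq> coeff q' 1"
    then have "coeff q 1 - coeff q' 1 \<noteq> 0" by simp
    from quad_no_rat[OF Q this, where a = "coeff q' 0 - coeff q 0"] D show False by blast
  qed
  then have 0: "coeff q 0 = coeff q' 0" using D by simp
  have "q = [:coeff q 0, coeff q 1, 1:]" using Q quad_shape unfolding quad_minpoly_def by blast
  moreover have "q' = [:coeff q' 0, coeff q' 1, 1:]" using Q' quad_shape unfolding quad_minpoly_def by blast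
  ultimately show ?thesis using 0 1 by simp
qed

lemma quad_the:
  assumes "quad_minpoly q \<beta>"
  shows "(THE q. quad_minpoly q \<beta>) = q"
  apply (rule the_equality)
  using assms quad_unique by auto

lemma lin_pow:
  fixes t m :: int
  shows "\<exists>A B::int. \<forall>x::complex. x^2 = of_int t * x - of_int m \<longrightarrow> x ^ n = of_int A + of_int B * x"
proof (induction n)
  case 0
  then show ?case by (intro exI[of _ 1] exI[of _ 0]) simp
next
  case (Suc n)
  then obtain A B where AB: "\<forall>x::complex. x^2 = of_int t * x - of_int m \<longrightarrow> x ^ n = of_int A + of_int B * x" by blast
  show ?case
  proof (rule exI[of _ "- B * m"], rule exI[of _ "A + B * t"], intro allI impI)
    fix x :: complex assume x: "x^2 = of_int t * x - of_int m"
    have "x ^ Suc n = x * (of_int A + of_int B * x)" using AB x by simp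
    also have "\<dots> = of_int A * x + of_int B * x^2" by (simp add: algebra_simps power2_eq_square)
    also have "\<dots> = of_int (- B * m) + of_int (A + B * t) * x" unfolding x by (simp add: algebra_simps)
    finally show "x ^ Suc n = of_int (- B * m) + of_int (A + B * t) * x" .
  qed
qed

lemma lin_poly:
  fixes t m :: int and f :: "nat poly"
  shows "\<exists>A B::int. \<forall>x::complex. x^2 = of_int t * x - of_int m \<longrightarrow> poly (map_poly of_nat f) x = of_int A + of_int B * x"
proof (induction f)
  case 0
  then show ?case by (intro exI[of _ 0] exI[of _ 0]) simp
next
  case (pCons a p)
  then obtain A B where AB: "\<forall>x::complex. x^2 = of_int t * x - of_int m \<longrightarrow> poly (map_poly of_nat p) x = of_int A + of_int B * x" by blast
  show ?case
  proof (rule exI[of _ "int a - B * m"], rule exI[of _ "A + B * t"], intro allI impI)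
    fix x :: complex assume x: "x^2 = of_int t * x - of_int m"
    have "poly (map_poly of_nat (pCons a p)) x = of_nat a + x * (of_int A + of_int B * x)" using AB x by (simp add: map_poly_pCons)
    also have "\<dots> = of_nat a + of_int A * x + of_int B * x^2" by (simp add: algebra_simps power2_eq_square)
    also have "\<dots> = of_int (int a - B * m) + of_int (A + B * t) * x" unfolding x by (simp add: algebra_simps)
    finally show "poly (map_poly of_nat (pCons a p)) x = of_int (int a - B * m) + of_int (A + B * t) * x" .
  qed
qed

lemma poly_real:
  fixes f :: "nat poly" and x :: real
  shows "poly (map_poly of_nat f) (complex_of_real x) = complex_of_real (poly (map_poly of_nat f) x)"
  by (induction f) (simp_all add: map_poly_pCons)

lemma coeff_le_poly:
  fixes f :: "nat poly" and x :: real
  assumes "x \<ge> 0"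
  shows "of_nat (coeff f k) * x ^ k \<le> poly (map_poly of_nat f) x"
proof (cases "k \<le> degree (map_poly (of_nat :: nat \<Rightarrow> real) f)")
  case True
  have "poly (map_poly of_nat f) x = (\<Sum>i\<le>degree (map_poly (of_nat :: nat \<Rightarrow> real) f). of_nat (coeff f i) * x ^ i)"
    by (simp add: poly_altdef coeff_map_poly)
  moreover have "of_nat (coeff f k) * x ^ k \<le> (\<Sum>i\<le>degree (map_poly (of_nat :: nat \<Rightarrow> real) f). of_nat (coeff f i) * x ^ i)"
    using True assms by (intro member_le_sum) auto
  ultimately show ?thesis by simp
next
  case False
  have "coeff (map_poly (of_nat :: nat \<Rightarrow> real) f) k = 0" using False by (intro coeff_eq_0) simp
  then have "coeff f k = 0" by (simp add: coeff_map_poly)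
  moreover have "poly (map_poly of_nat f) x \<ge> 0"
    by (simp add: poly_altdef coeff_map_poly assms sum_nonneg)
  ultimately show ?thesis by simp
qed

theorem proposition11:
  fixes \<beta> :: complex
  assumes "totally_positive \<beta>"
    and "qtrace \<beta> > qnorm \<beta>"
  shows "\<exists>c::nat. c > 0 \<and>
           (\<forall>n::nat. p_count \<beta> (of_int (qtrace \<beta>) * \<beta> ^ n) \<le> enat c)"
proof -
  obtain q where Q: "quad_minpoly q \<beta>"
    using assms(1) unfolding totally_positive_def quadratic_integer_def by blast
  define t where "t = qtrace \<beta>"
  define m where "m = qnorm \<beta>"
  have tq: "t = - coeff q 1" unfolding t_def qtrace_def quad_the[OF Q] ..
  have mq: "m = coeff q 0" unfolding m_def qnorm_def quad_the[OF Q] ..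
  have tm: "t > m" using assms(2) t_def m_def by simp
  have E: "\<beta>^2 = of_int t * \<beta> - of_int m"
  proof -
    have E0: "\<beta>^2 + of_int (-t) * \<beta> + of_int m = 0" using quad_eval[OF Q] tq mq by simp
    have "\<beta>^2 - (of_int t * \<beta> - of_int m) = \<beta>^2 + of_int (-t) * \<beta> + of_int m" by simp
    then have "\<beta>^2 - (of_int t * \<beta> - of_int m) = 0" using E0 by (rule trans)
    then show ?thesis by (simp only: right_minus_eq)
  qed
  define \<beta>' where "\<beta>' = qconj \<beta>"
  have b': "\<beta>' = of_int t - \<beta>" unfolding \<beta>'_def qconj_def t_def ..
  have E': "\<beta>'^2 = of_int t * \<beta>' - of_int m"
    using E unfolding b' by (simp add: algebra_simps power2_eq_square)
  define r where "r = Re \<beta>"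
  define s where "s = Re \<beta>'"
  have rR: "\<beta> = of_real r" using assms(1) unfolding totally_positive_def r_def
    by (simp add: complex_is_Real_iff complex_eq_iff)
  have sR: "\<beta>' = of_real s" using assms(1) unfolding totally_positive_def s_def \<beta>'_def
    by (simp add: complex_is_Real_iff complex_eq_iff)
  have r0: "r > 0" and s0: "s > 0" using assms(1) unfolding totally_positive_def r_def s_def \<beta>'_def by auto
  have st: "s = t - r" using b' unfolding s_def r_def by simp
  have Er: "r^2 = t * r - m"
  proof -
    have "complex_of_real (r^2) = complex_of_real (t * r - m)" using E unfolding rR by simp
    then show ?thesis using of_real_eq_iff by blast
  qed
  have r1: "r \<noteq> 1"
  proof
    assume "r = 1"
    then have "of_int 1 * \<beta> = of_int 1" using rR by simp
    then show False using quad_no_rat[OF Q, of 1 1] by simp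
  qed
  have s1: "s \<noteq> 1"
  proof
    assume "s = 1"
    then have "of_int 1 * \<beta> = of_int (t - 1)" using rR st by (simp add: complex_eq_iff)
    then show False using quad_no_rat[OF Q, of 1 "t - 1"] by simp
  qed
  have "r * s = t * r - r^2" by (simp add: st algebra_simps power2_eq_square)
  then have rs: "r * s = m" using Er by linarith
  have "(1 - r) * (1 - s) = 1 - (r + s) + r * s" by (simp add: algebra_simps)
  also have "\<dots> = 1 - t + m" using rs st by simp
  also have "\<dots> \<le> 0" using tm by linarith
  finally have "(1 - r) * (1 - s) < 0" using r1 s1 by (simp add: less_le)
  then have rs1: "(r < 1 \<and> 1 < s) \<or> (s < 1 \<and> 1 < r)"
    by (smt (verit) mult_nonneg_nonneg mult_nonpos_nonpos)
  define g where "g = max r s"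
  define d where "d = min r s"
  have g1: "g > 1" and d1: "d < 1" and d0: "d > 0" and gd: "g = r \<and> d = s \<or> g = s \<and> d = r"
    using rs1 r0 s0 unfolding g_def d_def by auto
  have t1: "t \<ge> 1" using r0 s0 st by simp
  obtain K1 where K1: "d ^ K1 < 1 / t" using real_arch_pow_inv[of "1 / t" d] d1 t1 by auto
  obtain K2 where K2: "t < g ^ K2" using real_arch_pow[OF g1] by auto
  define K where "K = K1 + K2"
  have dK: "t * d ^ K < 1"
  proof -
    have "d ^ K \<le> d ^ K1" unfolding K_def using d0 d1 by (intro power_decreasing) auto
    then have "t * d ^ K \<le> t * d ^ K1" using t1 by (intro mult_left_mono) auto
    also have "\<dots> < 1" using K1 t1 by (simp add: field_simps)
    finally show ?thesis .
  qed
  have gK: "t < g ^ K"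
    using K2 unfolding K_def using g1 by (smt (verit) le_add2 power_increasing)
  define S where "S n = {f :: nat poly. poly (map_poly of_nat f) \<beta> = of_int t * \<beta> ^ n}" for n
  have conj: "poly (map_poly of_nat f) \<beta>' = of_int t * \<beta>' ^ n" if "f \<in> S n" for f n
  proof -
    obtain A B where AB: "\<forall>x::complex. x^2 = of_int t * x - of_int m \<longrightarrow> poly (map_poly of_nat f) x = of_int A + of_int B * x"
      using lin_poly by blast
    obtain A' B' where AB': "\<forall>x::complex. x^2 = of_int t * x - of_int m \<longrightarrow> x ^ n = of_int A' + of_int B' * x"
      using lin_pow by blast
    have "of_int A + of_int B * \<beta> = of_int t * (of_int A' + of_int B' * \<beta>)"
      using that AB AB' E unfolding S_def by auto
    then have D: "of_int (B - t * B') * \<beta> = of_int (t * A' - A)" by (simp add: algebra_simps)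
    have B: "B = t * B'"
    proof (rule ccontr)
      assume "B \<noteq> t * B'"
      then have "B - t * B' \<noteq> 0" by simp
      from quad_no_rat[OF Q this, where a = "t * A' - A"] D show False by blast
    qed
    then have "(of_int (t * A' - A) :: complex) = 0" using D by simp
    then have "t * A' - A = 0" by (simp only: of_int_eq_0_iff)
    then have A: "A = t * A'" by simp
    show ?thesis using AB AB' E' A B by (simp add: algebra_simps)
  qed
  have realeq: "poly (map_poly of_nat f) x = t * x ^ n" if "f \<in> S n" "x = r \<or> x = s" for f n and x :: real
  proof -
    have "poly (map_poly of_nat f) (complex_of_real x) = of_int t * (complex_of_real x) ^ n"
      using that conj[OF that(1)] rR sR unfolding S_def by auto
    then have "complex_of_real (poly (map_poly of_nat f) x) = complex_of_real (t * x ^ n)"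
      by (simp add: poly_real)
    then show ?thesis using of_real_eq_iff by blast
  qed
  have cle: "real (coeff f k) * x ^ k \<le> t * x ^ n" if "f \<in> S n" "x = r \<or> x = s" for f n k and x :: real
    using coeff_le_poly[of x f k] realeq[OF that] that r0 s0 by auto
  have cled: "real (coeff f k) * d ^ k \<le> t * d ^ n" if "f \<in> S n" for f n k
    using cle[OF that] gd by blast
  have cleg: "real (coeff f k) * g ^ k \<le> t * g ^ n" if "f \<in> S n" for f n k
    using cle[OF that] gd by blast
  have bound: "coeff f k \<le> nat t" if "f \<in> S n" for f n k
  proof -
    have "real (coeff f k) \<le> t"
    proof (cases "k \<le> n")
      case True
      have "real (coeff f k) * d ^ k \<le> t * d ^ n" using cled[OF that] .
      also have "\<dots> \<le> t * d ^ k" using True d0 d1 t1 by (intro mult_left_mono power_decreasing) auto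
      finally show ?thesis using d0 by simp
    next
      case False
      have "real (coeff f k) * g ^ k \<le> t * g ^ n" using cleg[OF that] .
      also have "\<dots> \<le> t * g ^ k" using False g1 t1 by (intro mult_left_mono power_increasing) auto
      finally show ?thesis using g1 by simp
    qed
    then show ?thesis by linarith
  qed
  have supp: "n < k + K \<and> k < n + K" if "f \<in> S n" "coeff f k \<noteq> 0" for f n k
  proof (rule ccontr)
    assume "\<not> (n < k + K \<and> k < n + K)"
    then consider "k + K \<le> n" | "n + K \<le> k" by linarith
    then show False
    proof cases
      case 1
      have c1: "real (coeff f k) \<ge> 1" using that(2) by simp
      have "d ^ k \<le> real (coeff f k) * d ^ k" using c1 d0 by simp
      also have "\<dots> \<le> t * d ^ n" using cled[OF that(1)] .
      also have "d ^ n = d ^ k * d ^ (n - k)" using 1 by (simp flip: power_add)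
      also have "d ^ (n - k) \<le> d ^ K" using 1 d0 d1 by (intro power_decreasing) auto
      then have "t * (d ^ k * d ^ (n - k)) \<le> d ^ k * (t * d ^ K)" using t1 d0
        by (simp add: mult_left_mono)
      also have "\<dots> < d ^ k" using dK d0 by simp
      finally show False by simp
    next
      case 2
      have c1: "real (coeff f k) \<ge> 1" using that(2) by simp
      have "g ^ k = g ^ n * g ^ (k - n)" using 2 by (simp flip: power_add)
      also have "g ^ (k - n) \<ge> g ^ K" using 2 g1 by (intro power_increasing) auto
      then have "g ^ n * g ^ (k - n) \<ge> g ^ n * g ^ K" using g1 by simp
      finally have "g ^ k \<ge> g ^ n * g ^ K" .
      moreover have "g ^ n * g ^ K > g ^ n * t" using gK g1 by simp
      moreover have "g ^ k \<le> t * g ^ n" using cleg[OF that(1), of k] c1 g1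
        by (smt (verit) mult_le_cancel_right1 zero_less_power)
      ultimately show False by (simp add: algebra_simps)
    qed
  qed
  define W where "W = 2 * K"
  define c where "c = (nat t + 1) ^ W"
  have "p_count \<beta> (of_int t * \<beta> ^ n) \<le> enat c" for n
  proof -
    define L where "L = n - K"
    define F where "F f = map (\<lambda>j. coeff f (L + j)) [0..<W]" for f :: "nat poly"
    define B where "B = {xs. set xs \<subseteq> {0..nat t} \<and> length xs = W}"
    have win: "coeff f k = 0" if "f \<in> S n" "\<not> (L \<le> k \<and> k < L + W)" for f k
      using supp[OF that(1), of k] that(2) unfolding L_def W_def by linarith
    have inj: "inj_on F (S n)"
    proof (rule inj_onI)
      fix f h assume f: "f \<in> S n" and h: "h \<in> S n" and Fe: "F f = F h"
      show "f = h"
      proof (rule poly_eqI)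
        fix k
        show "coeff f k = coeff h k"
        proof (cases "L \<le> k \<and> k < L + W")
          case True
          then have "F f ! (k - L) = F h ! (k - L)" using Fe by simp
          moreover have i: "k - L < W" and kL: "L + (k - L) = k" using True by linarith+
          moreover have "F g ! (k - L) = coeff g (L + (k - L))" for g
            unfolding F_def using i by simp
          ultimately show ?thesis by (simp only: kL)
        next
          case False
          then show ?thesis using win[OF f False] win[OF h False] by simp
        qed
      qed
    qed
    have sub: "F ` S n \<subseteq> B"
      unfolding B_def F_def using bound by auto
    have finB: "finite B" unfolding B_def by (intro finite_lists_length_eq) simp
    have cardB: "card B = c" unfolding B_def c_def by (subst card_lists_length_eq) auto
    have fin: "finite (S n)" using inj_on_finite[OF inj sub finB] .
    have "card (S n) \<le> c" using card_inj_on_le[OF inj sub finB] cardB by simp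
    moreover have "{f :: nat poly. poly (map_poly of_nat f) \<beta> = of_int t * \<beta> ^ n} = S n"
      unfolding S_def ..
    ultimately show ?thesis using fin unfolding p_count_def Let_def by simp
  qed
  moreover have "c > 0" unfolding c_def by simp
  ultimately show ?thesis unfolding t_def by blast
qed

end
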